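(* Let $N\ge3$ be an integer and consider the equation $$-w''+(N-2)w'+(N-1)w=\frac{1}{3}\binom{N-1}{2}w^3 .$$ Then: (D) the only $w\in C^2([0,\infty))$ solving it on $[0,\infty)$ with $w(0)=0$ and $\lim_{t\to\infty}w(t)=0$ is $w\equiv0$; (Nav) the only $w\in C^2([0,\infty))$ solving it on $[0,\infty)$ with $w'(0)-(N-1)w(0)=0$ and $\lim_{t\to\infty}w(t)=0$ is $w\equiv0$; (E) the only $w\in C^2(\mathbb{R})$ solving it on $\mathbb{R}$ with $\lim_{t\to\pm\infty}w(t)=0$ is $w\equiv0$.
   Context: These are the radial Dirichlet, Navier and entire problems for $\Delta^2u=-S_3[u]$ ($S_3$ the third elementary symmetric polynomial of the Hessian eigenvalues), i.e. $k=3$, $\lambda=0$, obtained via $v=u'$, $w(t)=-v(e^{-t})$. *)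

theory Defs
  imports "HOL-Analysis.Analysis"
begin

definition C2_on :: "real set \<Rightarrow> (real \<Rightarrow> real) \<Rightarrow> (real \<Rightarrow> real) \<Rightarrow> (real \<Rightarrow> real) \<Rightarrow> bool" where
  "C2_on S w w1 w2 \<longleftrightarrow>
     (\<forall>t\<in>S. (w has_real_derivative w1 t) (at t within S) \<and>
             (w1 has_real_derivative w2 t) (at t within S)) \<and>
     continuous_on S w2"

definition ode_at :: "nat \<Rightarrow> (real \<Rightarrow> real) \<Rightarrow> (real \<Rightarrow> real) \<Rightarrow> (real \<Rightarrow> real) \<Rightarrow> real \<Rightarrow> bool" where
  "ode_at N w w1 w2 t \<longleftrightarrow>
     - w2 t + (real N - 2) * w1 t + (real N - 1) * w t
       = (1/3) * real ((N - 1) choose 2) * (w t) ^ 3"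

end

theory Submission
  imports Defs
begin

lemma within_to_at:
  assumes "(f has_real_derivative D) (at t within {a..})" "a < (t::real)"
  shows "(f has_real_derivative D) (at t)"
proof -
  have "(f has_real_derivative D) (at t within {a<..})"
    using assms(1) by (rule has_field_derivative_subset) auto
  moreover have "at t within {a<..} = at t"
    using assms(2) by (intro at_within_open) auto
  ultimately show ?thesis by simp
qed

lemma mvt_within:
  fixes f f' :: "real \<Rightarrow> real"
  assumes d: "\<And>t. t \<ge> a \<Longrightarrow> (f has_real_derivative f' t) (at t within {a..})"
    and "a \<le> x" "x < y"
  shows "\<exists>z. x < z \<and> z < y \<and> f y - f x = (y - x) * f' z"
proof -
  have "continuous_on {a..} f"
    using d by (meson DERIV_continuous atLeast_iff continuous_on_eq_continuous_within)
  hence c: "continuous_on {x..y} f"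
    by (rule continuous_on_subset) (use assms in auto)
  have dd: "\<And>z. x < z \<Longrightarrow> (f has_real_derivative f' z) (at z)"
    using d within_to_at assms(2) by (meson le_less_trans less_imp_le)
  obtain l z where "x < z" "z < y" "DERIV f z :> l" "f y - f x = (y - x) * l"
    using MVT[OF \<open>x < y\<close> c] dd real_differentiable_def by blast
  moreover have "l = f' z" using DERIV_unique[OF \<open>DERIV f z :> l\<close> dd[OF \<open>x < z\<close>]] .
  ultimately show ?thesis by blast
qed

definition En :: "real \<Rightarrow> real \<Rightarrow> (real \<Rightarrow> real) \<Rightarrow> (real \<Rightarrow> real) \<Rightarrow> real \<Rightarrow> real" where
  "En b c w w1 t = w1 t ^ 2 / 2 - b * w t ^ 2 / 2 + c * w t ^ 4 / 4"

lemma En_deriv: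
  assumes C: "C2_on {a..} w w1 w2" and O: "\<forall>t\<ge>a. ode_at N w w1 w2 t" and t: "t \<ge> a"
  shows "(En (real N - 1) ((1/3) * real ((N - 1) choose 2)) w w1 has_real_derivative
          (real N - 2) * w1 t ^ 2) (at t within {a..})"
proof -
  let ?b = "real N - 1" and ?c = "(1/3) * real ((N - 1) choose 2)"
  have d1: "(w has_real_derivative w1 t) (at t within {a..})"
   and d2: "(w1 has_real_derivative w2 t) (at t within {a..})"
    using C t unfolding C2_on_def by auto
  have e: "w2 t = (real N - 2) * w1 t + ?b * w t - ?c * w t ^ 3"
    using O t unfolding ode_at_def by (auto simp: algebra_simps)
  have ef: "En ?b ?c w w1 = (\<lambda>t. w1 t ^ 2 / 2 - ?b * w t ^ 2 / 2 + ?c * w t ^ 4 / 4)"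
    unfolding En_def by auto
  show ?thesis unfolding ef
    by (rule derivative_eq_intros d1 d2 refl | simp)+ (simp add: e algebra_simps power2_eq_square power3_eq_cube)
qed

abbreviation EN where "EN N \<equiv> En (real N - 1) ((1/3) * real ((N - 1) choose 2))"

lemma w_deriv:
  assumes C: "C2_on {a..} w w1 w2" and t: "t \<ge> a"
  shows "(w has_real_derivative w1 t) (at t within {a..})"
  using C t unfolding C2_on_def by auto

lemma En_mono:
  assumes C: "C2_on {a..} w w1 w2" and O: "\<forall>t\<ge>a. ode_at N w w1 w2 t" and N: "N \<ge> 3"
    and "a \<le> x" "x \<le> y"
  shows "EN N w w1 x \<le> EN N w w1 y"
proof (cases "x = y")
  case False
  then have "x < y" using assms by auto
  from mvt_within[OF En_deriv[OF C O] \<open>a \<le> x\<close> this]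
  obtain z where "x < z" "z < y" "EN N w w1 y - EN N w w1 x = (y - x) * ((real N - 2) * w1 z ^ 2)"
    by blast
  moreover have "(y - x) * ((real N - 2) * w1 z ^ 2) \<ge> 0"
    using N \<open>x < y\<close> by (intro mult_nonneg_nonneg) auto
  ultimately show ?thesis by linarith
qed simp

lemma cpos: "N \<ge> 3 \<Longrightarrow> (1/3) * real ((N - 1) choose 2) > (0::real)"
  by (simp add: zero_less_binomial_iff)

lemma En_le0:
  assumes C: "C2_on {a..} w w1 w2" and O: "\<forall>t\<ge>a. ode_at N w w1 w2 t" and N: "N \<ge> 3"
    and L: "(w \<longlongrightarrow> 0) at_top" and t: "t \<ge> a"
  shows "EN N w w1 t \<le> 0"
proof (rule ccontr)
  let ?b = "real N - 1" and ?c = "(1/3) * real ((N - 1) choose 2)"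
  define \<delta> where "\<delta> = EN N w w1 t"
  assume "\<not> EN N w w1 t \<le> 0"
  hence dp: "\<delta> > 0" unfolding \<delta>_def by simp
  have "((\<lambda>s. ?c * w s ^ 4 / 4) \<longlongrightarrow> ?c * 0 ^ 4 / 4) at_top"
    by (intro tendsto_intros L) simp
  hence "eventually (\<lambda>s. ?c * w s ^ 4 / 4 < \<delta> / 2) at_top"
    using dp by (intro order_tendstoD) auto
  moreover have "eventually (\<lambda>s. norm (w s) < 1) at_top"
    using L by (intro order_tendstoD(2)[OF tendsto_norm_zero]) auto
  ultimately have "eventually (\<lambda>s. ?c * w s ^ 4 / 4 < \<delta> / 2 \<and> norm (w s) < 1) at_top"
    by (rule eventually_conj)
  then obtain T where T: "\<And>s. s \<ge> T \<Longrightarrow> ?c * w s ^ 4 / 4 < \<delta> / 2 \<and> norm (w s) < 1"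
    by (auto simp: eventually_at_top_linorder)
  define T' where "T' = max T t"
  have big: "w1 s ^ 2 \<ge> \<delta>" if "s \<ge> T'" for s
  proof -
    have "EN N w w1 t \<le> EN N w w1 s"
      using En_mono[OF C O N t] that by (auto simp: T'_def)
    hence "\<delta> \<le> w1 s ^ 2 / 2 - ?b * w s ^ 2 / 2 + ?c * w s ^ 4 / 4"
      unfolding \<delta>_def En_def by simp
    moreover have "?b * w s ^ 2 \<ge> 0" using N by auto
    moreover have "?c * w s ^ 4 / 4 < \<delta> / 2" using T that by (auto simp: T'_def)
    ultimately show ?thesis by linarith
  qed
  define k where "k = 3 / sqrt \<delta>"
  have kp: "k > 0" using dp by (simp add: k_def)
  have k2: "k ^ 2 * \<delta> = 9" using dp by (simp add: k_def power_divide)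
  have "a \<le> T'" using t by (simp add: T'_def)
  obtain z where z: "T' < z" "z < T' + k" "w (T' + k) - w T' = (T' + k - T') * w1 z"
    using mvt_within[OF w_deriv[OF C] \<open>a \<le> T'\<close>, of "T' + k"] kp by auto
  have "(w (T' + k) - w T') ^ 2 = k ^ 2 * w1 z ^ 2" using z(3) by (simp add: power_mult_distrib)
  also have "\<dots> \<ge> k ^ 2 * \<delta>" using big[of z] z(1) by (intro mult_left_mono) auto
  finally have g9: "(w (T' + k) - w T') ^ 2 \<ge> 9" using k2 by simp
  have "\<bar>w (T' + k)\<bar> < 1" "\<bar>w T'\<bar> < 1" using T[of "T' + k"] T[of T'] kp by (auto simp: T'_def)
  hence "\<bar>w (T' + k) - w T'\<bar> < 2" by linarith
  hence "(w (T' + k) - w T') ^ 2 < 2 ^ 2"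
    by (metis abs_ge_zero abs_power2 power_strict_mono zero_less_numeral power2_abs pos2)
  with g9 show False by simp
qed

lemma w1_zero:
  assumes C: "C2_on {a..} w w1 w2" and O: "\<forall>t\<ge>a. ode_at N w w1 w2 t" and N: "N \<ge> 3"
    and E: "\<And>t. t \<ge> a \<Longrightarrow> EN N w w1 t = 0" and t: "t > a"
  shows "w1 t = 0"
proof -
  have d: "(EN N w w1 has_real_derivative (real N - 2) * w1 t ^ 2) (at t)"
    using within_to_at[OF En_deriv[OF C O] t] t by simp
  have "(real N - 2) * w1 t ^ 2 = 0"
    by (rule DERIV_local_const[OF d, of "t - a"]) (use t E in auto)
  thus ?thesis using N by simp
qed

lemma w_zero:
  assumes C: "C2_on {a..} w w1 w2" and W1: "\<And>t. t > a \<Longrightarrow> w1 t = 0"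
    and L: "(w \<longlongrightarrow> 0) at_top" and t: "t \<ge> a"
  shows "w t = 0"
proof -
  have "eventually (\<lambda>s. w s = w t) at_top"
  proof (rule eventually_at_top_linorderI[of "t + 1"])
    fix s assume "s \<ge> t + 1"
    then obtain z where "t < z" "z < s" "w s - w t = (s - t) * w1 z"
      using mvt_within[OF w_deriv[OF C] t, of s] by auto
    thus "w s = w t" using W1[of z] t by auto
  qed
  have "((\<lambda>s::real. w t) \<longlongrightarrow> 0) at_top"
    using tendsto_cong[OF \<open>eventually (\<lambda>s. w s = w t) at_top\<close>] L by simp
  thus ?thesis by (simp add: tendsto_const_iff)
qed

lemma core:
  assumes C: "C2_on {a..} w w1 w2" and O: "\<forall>t\<ge>a. ode_at N w w1 w2 t" and N: "N \<ge> 3"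
    and L: "(w \<longlongrightarrow> 0) at_top" and E0: "EN N w w1 a \<ge> 0" and t: "t \<ge> a"
  shows "w t = 0"
proof -
  have E: "EN N w w1 s = 0" if "s \<ge> a" for s
    using En_le0[OF C O N L that] En_mono[OF C O N order.refl that] E0 by linarith
  show ?thesis
    using w_zero[OF C w1_zero[OF C O N E] L t] by blast
qed

lemma C2_sub:
  assumes "C2_on UNIV w w1 w2"
  shows "C2_on {a..} w w1 w2"
  using assms unfolding C2_on_def
  by (auto intro: has_field_derivative_subset continuous_on_subset)

theorem theorem5p1:
  fixes N :: nat
  assumes "N \<ge> 3"
  shows
   "(\<forall>w w1 w2. C2_on {0..} w w1 w2 \<and> (\<forall>t\<ge>0. ode_at N w w1 w2 t) \<and>
        w 0 = 0 \<and> (w \<longlongrightarrow> 0) at_top \<longrightarrow> (\<forall>t\<ge>0. w t = 0))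
  \<and> (\<forall>w w1 w2. C2_on {0..} w w1 w2 \<and> (\<forall>t\<ge>0. ode_at N w w1 w2 t) \<and>
        w1 0 - (real N - 1) * w 0 = 0 \<and> (w \<longlongrightarrow> 0) at_top \<longrightarrow> (\<forall>t\<ge>0. w t = 0))
  \<and> (\<forall>w w1 w2. C2_on UNIV w w1 w2 \<and> (\<forall>t. ode_at N w w1 w2 t) \<and>
        (w \<longlongrightarrow> 0) at_top \<and> (w \<longlongrightarrow> 0) at_bot \<longrightarrow> (\<forall>t. w t = 0))"
proof (intro conjI allI impI)
  have cp: "(1/3) * real ((N - 1) choose 2) > (0::real)" using cpos[OF assms] .
  fix w w1 w2 t :: "real \<Rightarrow> real"
  {
    fix w w1 w2 :: "real \<Rightarrow> real" and t :: real
    assume H: "C2_on {0..} w w1 w2 \<and> (\<forall>t\<ge>0. ode_at N w w1 w2 t) \<and> w 0 = 0 \<and> (w \<longlongrightarrow> 0) at_top"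
      and t: "t \<ge> 0"
    have "EN N w w1 0 \<ge> 0" using H by (simp add: En_def)
    then show "w t = 0" using core[of 0 w w1 w2 N] H t assms by blast
  }
  {
    fix w w1 w2 :: "real \<Rightarrow> real" and t :: real
    assume H: "C2_on {0..} w w1 w2 \<and> (\<forall>t\<ge>0. ode_at N w w1 w2 t) \<and>
        w1 0 - (real N - 1) * w 0 = 0 \<and> (w \<longlongrightarrow> 0) at_top"
      and t: "t \<ge> 0"
    have e: "w1 0 = (real N - 1) * w 0" using H by simp
    have "EN N w w1 0 = ((real N - 1) * (real N - 2)) * w 0 ^ 2 / 2
        + (1/3) * real ((N - 1) choose 2) * w 0 ^ 4 / 4"
      unfolding En_def e by (simp add: power_mult_distrib field_simps power2_eq_square)
    also have "\<dots> \<ge> 0" using assms cp by (intro add_nonneg_nonneg mult_nonneg_nonneg divide_nonneg_pos) auto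
    finally show "w t = 0" using core[of 0 w w1 w2 N] H t assms by blast
  }
  {
    fix w w1 w2 :: "real \<Rightarrow> real" and t :: real
    assume H: "C2_on UNIV w w1 w2 \<and> (\<forall>t. ode_at N w w1 w2 t) \<and>
        (w \<longlongrightarrow> 0) at_top \<and> (w \<longlongrightarrow> 0) at_bot"
    have Ca: "\<And>a. C2_on {a..} w w1 w2" using H C2_sub by blast
    have Oa: "\<And>a. \<forall>t\<ge>a. ode_at N w w1 w2 t" using H by blast
    have Ege: "EN N w w1 s \<ge> 0" for s
    proof (rule ccontr)
      define \<delta> where "\<delta> = - EN N w w1 s"
      assume "\<not> EN N w w1 s \<ge> 0"
      hence dp: "\<delta> > 0" by (simp add: \<delta>_def)
      have "((\<lambda>r. (real N - 1) * w r ^ 2 / 2) \<longlongrightarrow> (real N - 1) * 0 ^ 2 / 2) at_bot"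
        using H by (intro tendsto_intros) auto
      hence "eventually (\<lambda>r. (real N - 1) * w r ^ 2 / 2 < \<delta>) at_bot"
        using dp by (intro order_tendstoD) auto
      then obtain R where R: "\<And>r. r \<le> R \<Longrightarrow> (real N - 1) * w r ^ 2 / 2 < \<delta>"
        by (auto simp: eventually_at_bot_linorder)
      define r where "r = min R s"
      have "EN N w w1 r \<le> EN N w w1 s"
        using En_mono[OF Ca Oa assms order.refl, of r s] by (simp add: r_def)
      moreover have "EN N w w1 r \<ge> - ((real N - 1) * w r ^ 2 / 2)"
        unfolding En_def using cp by (simp add: add_nonneg_nonneg)
      moreover have "(real N - 1) * w r ^ 2 / 2 < \<delta>" using R by (simp add: r_def)
      ultimately show False unfolding \<delta>_def by linarith
    qed
    show "w t = 0"
      using core[OF Ca Oa assms _ Ege, of "t - 1" t] H by auto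
  }
qed

end
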